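(* Fix $a$ and $q$ (with $|q|<1$, or formally), and let $(\boldsymbol{\alpha}_n(a))_{n\ge0}$ be a sequence with $\boldsymbol{\alpha}_0(a)=1$ that does not depend on $k$. For each $k$ let $\boldsymbol{\beta}_n(a,k)$ be defined so that $(\boldsymbol{\alpha}_n(a),\boldsymbol{\beta}_n(a,k))$ is a WP-Bailey pair (relative to $a$, with parameter $k$), and set $\boldsymbol{\beta}_{-1}(a,k):=0$. Define $\boldsymbol{\alpha}^*_0(a)=\boldsymbol{\beta}^*_0(a,k)=1$ and, for $n\ge1$, \[ \boldsymbol{\alpha}_n^*(a) = (aq^n+q^{-n})\boldsymbol{\alpha}_n(a), \] \[ \boldsymbol{\beta}_n^*(a,k) = \frac{(1+aq^{2n})\boldsymbol{\beta}_n(a,k)-(1-k)\left(1-\frac{k}{a}\right)\boldsymbol{\beta}_{n-1}(a,kq)}{q^{n}} - a\,\frac{(k,k/a;q)_{n}}{(aq,q;q)_{n}}. \] Then $(\boldsymbol{\alpha}_n^*(a),\boldsymbol{\beta}_n^*(a,k))$ is a WP-Bailey pair (relative to $a$, with parameter $k$).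
   Context: Notation: $(x;q)_n=\prod_{i=0}^{n-1}(1-xq^i)$, $(x_1,\dots,x_j;q)_n=(x_1;q)_n\cdots(x_j;q)_n$, and similarly for $n=\infty$. A pair of sequences $(\boldsymbol{\alpha}_n(a,k,q),\boldsymbol{\beta}_n(a,k,q))_{n\ge0}$ is a WP-Bailey pair (relative to $a$, with parameter $k$) if $\boldsymbol{\alpha}_0=1$ and for all $n\ge0$ \[\boldsymbol{\beta}_n=\sum_{j=0}^n\frac{(k/a;q)_{n-j}(k;q)_{n+j}}{(q;q)_{n-j}(aq;q)_{n+j}}\boldsymbol{\alpha}_j.\] Parameters are assumed generic so that no denominator vanishes. *)

theory Defs
  imports Complex_Main
begin

definition qpoch :: "complex \<Rightarrow> complex \<Rightarrow> nat \<Rightarrow> complex" where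
  "qpoch x q n = (\<Prod>i<n. (1 - x * q ^ i))"

definition WP_Bailey ::
  "complex \<Rightarrow> complex \<Rightarrow> complex \<Rightarrow> (nat \<Rightarrow> complex) \<Rightarrow> (nat \<Rightarrow> complex) \<Rightarrow> bool" where
  "WP_Bailey a k q \<alpha> \<beta> \<longleftrightarrow>
     \<alpha> 0 = 1 \<and>
     (\<forall>n. \<beta> n = (\<Sum>j\<le>n. (qpoch (k / a) q (n - j) * qpoch k q (n + j)) /
                            (qpoch q q (n - j) * qpoch (a * q) q (n + j)) * \<alpha> j))"

end

theory Submission
  imports Defs
begin

lemma qpoch_Suc: "qpoch x q (Suc m) = qpoch x q m * (1 - x * q ^ m)"
  by (simp add: qpoch_def)

lemma qpoch_Suc_shift: "qpoch x q (Suc m) = (1 - x) * qpoch (x * q) q m"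
  unfolding qpoch_def
  by (subst prod.lessThan_Suc_shift) (simp add: mult.assoc)

lemma qpoch_0[simp]: "qpoch x q 0 = 1"
  by (simp add: qpoch_def)

lemma key:
  fixes a q k :: complex
  assumes a: "a \<noteq> 0" and qq: "\<forall>m. qpoch q q m \<noteq> 0" and aq: "\<forall>m. qpoch (a * q) q m \<noteq> 0"
    and j: "j < n"
  shows "(1 - k) * (1 - k / a) * ((qpoch (k*q / a) q (n - 1 - j) * qpoch (k*q) q (n - 1 + j)) /
            (qpoch q q (n - 1 - j) * qpoch (a * q) q (n - 1 + j)))
       = (qpoch (k / a) q (n - j) * qpoch k q (n + j)) /
            (qpoch q q (n - j) * qpoch (a * q) q (n + j)) * ((1 - q ^ (n - j)) * (1 - a * q ^ (n + j)))"
proof -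
  have e1: "n - j = Suc (n - 1 - j)" and e2: "n + j = Suc (n - 1 + j)" using j by auto
  have A: "qpoch (k / a) q (n - j) = (1 - k/a) * qpoch (k*q/a) q (n - 1 - j)"
    by (subst e1, subst qpoch_Suc_shift) (simp add: field_simps)
  have B: "qpoch k q (n + j) = (1 - k) * qpoch (k*q) q (n - 1 + j)"
    by (subst e2, subst qpoch_Suc_shift) simp
  have C: "qpoch q q (n - j) = qpoch q q (n - 1 - j) * (1 - q ^ (n - j))"
    by (subst (1 2) e1, subst qpoch_Suc) simp
  have D: "qpoch (a*q) q (n + j) = qpoch (a*q) q (n - 1 + j) * (1 - a * q ^ (n + j))"
    by (subst (1 2) e2, subst qpoch_Suc) (simp add: mult.assoc)
  have n1: "qpoch q q (n - 1 - j) \<noteq> 0" "qpoch (a*q) q (n - 1 + j) \<noteq> 0" using qq aq by auto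
  have n2: "1 - q ^ (n - j) \<noteq> 0" "1 - a * q ^ (n + j) \<noteq> 0"
    using qq aq C D by (metis mult_zero_right)+
  have gen: "\<And>u v P Q R S x y :: complex. R \<noteq> 0 \<Longrightarrow> S \<noteq> 0 \<Longrightarrow> x \<noteq> 0 \<Longrightarrow> y \<noteq> 0 \<Longrightarrow>
     u * v * (P * Q / (R * S)) = (v * P) * (u * Q) / ((R * x) * (S * y)) * (x * y)"
    by (simp add: field_simps)
  show ?thesis unfolding A B C D by (rule gen[OF n1 n2])
qed

theorem mainTheorem1:
  fixes a q k :: complex
    and \<alpha> :: "nat \<Rightarrow> complex"
    and \<beta> :: "complex \<Rightarrow> nat \<Rightarrow> complex"
  assumes a_nz: "a \<noteq> 0"
    and q_nz: "q \<noteq> 0"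
    and qq_nz: "\<forall>m. qpoch q q m \<noteq> 0"
    and aq_nz: "\<forall>m. qpoch (a * q) q m \<noteq> 0"
    and alpha0: "\<alpha> 0 = 1"
    and pairs: "\<forall>k'. WP_Bailey a k' q \<alpha> (\<beta> k')"
  shows "WP_Bailey a k q
           (\<lambda>n. if n = 0 then 1 else (a * q ^ n + inverse (q ^ n)) * \<alpha> n)
           (\<lambda>n. if n = 0 then 1 else
                 ((1 + a * q ^ (2 * n)) * \<beta> k n
                   - (1 - k) * (1 - k / a) * \<beta> (k * q) (n - 1)) / q ^ n
                 - a * (qpoch k q n * qpoch (k / a) q n) / (qpoch (a * q) q n * qpoch q q n))"
proof -
  define F where "F n j k' = (qpoch (k' / a) q (n - j) * qpoch k' q (n + j)) /
                            (qpoch q q (n - j) * qpoch (a * q) q (n + j))" for n j k'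
  have bet: "\<beta> k' n = (\<Sum>j\<le>n. F n j k' * \<alpha> j)" for k' n
    using pairs unfolding WP_Bailey_def F_def by blast
  have main: "((1 + a * q ^ (2 * n)) * \<beta> k n
                   - (1 - k) * (1 - k / a) * \<beta> (k * q) (n - 1)) / q ^ n
                 - a * (qpoch k q n * qpoch (k / a) q n) / (qpoch (a * q) q n * qpoch q q n)
        = (\<Sum>j\<le>n. F n j k * (if j = 0 then 1 else (a * q ^ j + inverse (q ^ j)) * \<alpha> j))"
    if n: "n \<ge> 1" for n
  proof -
    have s1: "(1 - k) * (1 - k / a) * \<beta> (k * q) (n - 1)
        = (\<Sum>j\<le>n. F n j k * ((1 - q ^ (n - j)) * (1 - a * q ^ (n + j))) * \<alpha> j)"
    proof -
      have "{..n} = insert n {..n-1}" using n by auto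
      hence "(\<Sum>j\<le>n. F n j k * ((1 - q ^ (n - j)) * (1 - a * q ^ (n + j))) * \<alpha> j)
           = (\<Sum>j\<le>n-1. F n j k * ((1 - q ^ (n - j)) * (1 - a * q ^ (n + j))) * \<alpha> j)"
        using n by simp
      also have "\<dots> = (\<Sum>j\<le>n-1. (1 - k) * (1 - k / a) * F (n-1) j (k*q) * \<alpha> j)"
      proof (rule sum.cong)
        fix j assume "j \<in> {..n-1}"
        hence "j < n" using n by auto
        from key[OF a_nz qq_nz aq_nz this, of k] show
          "F n j k * ((1 - q ^ (n - j)) * (1 - a * q ^ (n + j))) * \<alpha> j
           = (1 - k) * (1 - k / a) * F (n-1) j (k*q) * \<alpha> j"
          unfolding F_def by (simp add: mult.assoc mult.commute mult.left_commute)
      qed simp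
      finally show ?thesis by (simp add: bet sum_distrib_left mult.assoc)
    qed
    have s2: "(1 + a * q ^ (2 * n)) * \<beta> k n - (1 - k) * (1 - k / a) * \<beta> (k * q) (n - 1)
       = (\<Sum>j\<le>n. F n j k * (a * q ^ (n + j) + q ^ (n - j)) * \<alpha> j)"
    proof -
      have "(1 + a * q ^ (2 * n)) * \<beta> k n - (1 - k) * (1 - k / a) * \<beta> (k * q) (n - 1)
         = (\<Sum>j\<le>n. F n j k * ((1 + a * q ^ (2 * n)) - (1 - q ^ (n - j)) * (1 - a * q ^ (n + j))) * \<alpha> j)"
        unfolding s1
        by (subst bet) (simp add: sum_distrib_left sum_subtractf[symmetric] algebra_simps)
      also have "\<dots> = (\<Sum>j\<le>n. F n j k * (a * q ^ (n + j) + q ^ (n - j)) * \<alpha> j)"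
      proof (rule sum.cong)
        fix j assume "j \<in> {..n}"
        hence "(n - j) + (n + j) = 2 * n" by auto
        hence "q ^ (n - j) * q ^ (n + j) = q ^ (2*n)" by (metis power_add)
        thus "F n j k * ((1 + a * q ^ (2 * n)) - (1 - q ^ (n - j)) * (1 - a * q ^ (n + j))) * \<alpha> j
            = F n j k * (a * q ^ (n + j) + q ^ (n - j)) * \<alpha> j"
          by (simp add: algebra_simps)
      qed simp
      finally show ?thesis .
    qed
    have s3: "(\<Sum>j\<le>n. F n j k * (a * q ^ (n + j) + q ^ (n - j)) * \<alpha> j) / q ^ n
        = (\<Sum>j\<le>n. F n j k * (a * q ^ j + inverse (q ^ j)) * \<alpha> j)"
      unfolding sum_divide_distrib
    proof (rule sum.cong)
      fix j assume "j \<in> {..n}"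
      hence jn: "j \<le> n" by auto
      have "q ^ n = q ^ (n - j) * q ^ j" using jn by (metis le_add_diff_inverse2 power_add)
      thus "F n j k * (a * q ^ (n + j) + q ^ (n - j)) * \<alpha> j / q ^ n
         = F n j k * (a * q ^ j + inverse (q ^ j)) * \<alpha> j"
        using q_nz by (simp add: field_simps power_add)
    qed simp
    have s4: "(\<Sum>j\<le>n. F n j k * (a * q ^ j + inverse (q ^ j)) * \<alpha> j)
        = F n 0 k * (a + 1) + (\<Sum>j\<in>{1..n}. F n j k * (a * q ^ j + inverse (q ^ j)) * \<alpha> j)"
    proof -
      have "{..n} = insert 0 {1..n}" by auto
      thus ?thesis by (simp add: alpha0)
    qed
    have s5: "(\<Sum>j\<le>n. F n j k * (if j = 0 then 1 else (a * q ^ j + inverse (q ^ j)) * \<alpha> j))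
        = F n 0 k + (\<Sum>j\<in>{1..n}. F n j k * (a * q ^ j + inverse (q ^ j)) * \<alpha> j)"
    proof -
      have "{..n} = insert 0 {1..n}" by auto
      thus ?thesis by (simp add: mult.assoc)
    qed
    have s6: "a * (qpoch k q n * qpoch (k / a) q n) / (qpoch (a * q) q n * qpoch q q n) = a * F n 0 k"
      unfolding F_def by (simp add: mult.commute)
    show ?thesis unfolding s2 s3 s4 s5 s6 by (simp add: algebra_simps)
  qed
  show ?thesis unfolding WP_Bailey_def
  proof (intro conjI allI)
    fix n
    show "(if n = 0 then 1 else ((1 + a * q ^ (2 * n)) * \<beta> k n
                   - (1 - k) * (1 - k / a) * \<beta> (k * q) (n - 1)) / q ^ n
                 - a * (qpoch k q n * qpoch (k / a) q n) / (qpoch (a * q) q n * qpoch q q n))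
      = (\<Sum>j\<le>n. (qpoch (k / a) q (n - j) * qpoch k q (n + j)) /
                            (qpoch q q (n - j) * qpoch (a * q) q (n + j)) *
          (if j = 0 then 1 else (a * q ^ j + inverse (q ^ j)) * \<alpha> j))"
    proof (cases "n = 0")
      case True thus ?thesis by simp
    next
      case False
      thus ?thesis using main[of n] unfolding F_def by simp
    qed
  qed simp
qed

end
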